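(* Let $G=(V,E)$ be a finite undirected graph with $V \subset \mathbb{N}$, and let $\mathbf{p}=(p_e)_{e\in E}$ be any collection of probabilities $p_e \in [0,1]$. Let $\vec G(\mathbf{p})$ be the random orientation of $G$ in which each edge $e=\{x,y\}\in E$ with $x<y$ is oriented from $x$ to $y$ with probability $p_e$ and from $y$ to $x$ otherwise, independently over edges, and let $\mathbb{P}_{G,\mathbf{p}}$ denote the corresponding probability measure. For vertices $x,y$, write $x\rightarrow y$ for the event that $\vec G(\mathbf{p})$ contains a directed path from $x$ to $y$. Then for any three vertices $s,a,b\in V$, \[\mathbb{P}_{G,\mathbf{p}}(s\rightarrow a \cap s\rightarrow b) \ge \mathbb{P}_{G,\mathbf{p}}(s\rightarrow a)\, \mathbb{P}_{G,\mathbf{p}}(s\rightarrow b).\]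
   Context: A directed path from $x$ to $x$ is taken to exist trivially (the path of length zero), so $x\rightarrow x$ always holds. *)

theory Defs
  imports "HOL-Probability.Probability"
begin

text \<open>Undirected simple graph on vertex set V of naturals: edges are 2-element subsets.\<close>

definition arcs :: "nat set set \<Rightarrow> (nat set \<Rightarrow> bool) \<Rightarrow> (nat \<times> nat) set" where
  "arcs E \<sigma> = {(Min e, Max e) | e. e \<in> E \<and> \<sigma> e} \<union> {(Max e, Min e) | e. e \<in> E \<and> \<not> \<sigma> e}"

definition reaches :: "nat set set \<Rightarrow> (nat set \<Rightarrow> bool) \<Rightarrow> nat \<Rightarrow> nat \<Rightarrow> bool" where
  "reaches E \<sigma> x y \<longleftrightarrow> (x, y) \<in> (arcs E \<sigma>)\<^sup>*"

definition rand_orient :: "nat set set \<Rightarrow> (nat set \<Rightarrow> real) \<Rightarrow> (nat set \<Rightarrow> bool) pmf" where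
  "rand_orient E p = Pi_pmf E False (\<lambda>e. bernoulli_pmf (p e))"

end

theory Submission imports Defs "HOL-Probability.Probability" begin
lemma split_prob:
  fixes M :: "'b pmf" and g :: "bool \<Rightarrow> 'b \<Rightarrow> 'c"
  assumes "0 \<le> q" "q \<le> 1"
  shows "measure_pmf.prob (bind_pmf (bernoulli_pmf q) (\<lambda>y. map_pmf (g y) M)) X
     = q * measure_pmf.prob M (g True -` X) + (1 - q) * measure_pmf.prob M (g False -` X)"
proof -
  have "ennreal (measure_pmf.prob (bind_pmf (bernoulli_pmf q) (\<lambda>y. map_pmf (g y) M)) X)
     = emeasure (bind_pmf (bernoulli_pmf q) (\<lambda>y. map_pmf (g y) M)) X"
    by (simp add: measure_pmf.emeasure_eq_measure)
  also have "\<dots> = (\<integral>\<^sup>+y. ennreal (measure_pmf.prob M (g y -` X)) \<partial>bernoulli_pmf q)"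
    by (subst emeasure_bind_pmf) (simp add: measure_pmf.emeasure_eq_measure)
  also have "\<dots> = ennreal (q * measure_pmf.prob M (g True -` X) + (1 - q) * measure_pmf.prob M (g False -` X))"
    using assms by (simp add: mult.commute ennreal_mult'[symmetric] ennreal_plus[symmetric] del: ennreal_plus)
  finally show ?thesis using assms by (subst (asm) ennreal_inj) auto
qed

lemma rand_orient_insert:
  assumes "finite E'" "e \<notin> E'"
  shows "rand_orient (insert e E') p = bind_pmf (bernoulli_pmf (p e)) (\<lambda>y. map_pmf (\<lambda>f. f(e:=y)) (rand_orient E' p))"
  unfolding rand_orient_def using assms
  by (subst Pi_pmf_insert') (auto simp: map_pmf_def)

lemma img_L1: "x \<in> S \<Longrightarrow> (insert (v,x) R)\<^sup>* `` S = R\<^sup>* `` S"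
  by (auto simp: rtrancl_insert)

lemma img_L2: "x \<in> S \<Longrightarrow> (insert (x,v) R)\<^sup>* `` S = R\<^sup>* `` (insert v S)"
  by (auto simp: rtrancl_insert)

lemma img_closed: assumes "\<forall>(u,w)\<in>R. u \<in> S \<longrightarrow> w \<in> S" shows "R\<^sup>* `` S = S"
proof -
  have "(z,w) \<in> R\<^sup>* \<Longrightarrow> z \<in> S \<Longrightarrow> w \<in> S" for z w
    by (induction rule: rtrancl_induct) (use assms in auto)
  then show ?thesis by auto
qed

lemma arcs_upd:
  assumes "e \<notin> E'"
  shows "arcs (insert e E') (f(e:=y)) = insert (if y then (Min e, Max e) else (Max e, Min e)) (arcs E' f)"
proof -
  have 1: "arcs (insert e E') g = insert (if g e then (Min e, Max e) else (Max e, Min e)) (arcs E' g)" for g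
    unfolding arcs_def by auto
  have 2: "arcs E' (f(e:=y)) = arcs E' f"
    unfolding arcs_def using assms by (auto; metis)
  show ?thesis using 1[of "f(e:=y)"] 2 by simp
qed

lemma main:
  fixes E :: "nat set set" and p :: "nat set \<Rightarrow> real"
  assumes "finite E" "\<forall>e\<in>E. card e = 2" "\<forall>e\<in>E. 0 \<le> p e \<and> p e \<le> 1"
  shows "measure_pmf.prob (rand_orient E p) {\<sigma>. a \<in> (arcs E \<sigma>)\<^sup>* `` S \<and> b \<in> (arcs E \<sigma>)\<^sup>* `` S}
    \<ge> measure_pmf.prob (rand_orient E p) {\<sigma>. a \<in> (arcs E \<sigma>)\<^sup>* `` S}
      * measure_pmf.prob (rand_orient E p) {\<sigma>. b \<in> (arcs E \<sigma>)\<^sup>* `` S}"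
  using assms
proof (induction "card E" arbitrary: E S rule: less_induct)
  case less
  show ?case
  proof (cases "\<exists>e\<in>E. \<exists>x\<in>e. \<exists>v\<in>e. x \<in> S \<and> v \<notin> S")
    case False
    have "(arcs E \<sigma>)\<^sup>* `` S = S" for \<sigma>
    proof (rule img_closed, safe)
      fix u w assume uw: "(u,w) \<in> arcs E \<sigma>" "u \<in> S"
      then obtain e where e: "e \<in> E" "(u = Min e \<and> w = Max e) \<or> (u = Max e \<and> w = Min e)"
        unfolding arcs_def by auto
      then have "finite e" "e \<noteq> {}" using less.prems(2) by (auto intro: card_ge_0_finite)
      then have "u \<in> e" "w \<in> e" using e(2) by (auto intro: Min_in Max_in)
      with e(1) show "w \<in> S" using False uw by blast
    qed
    then show ?thesis
      by (cases "a \<in> S"; cases "b \<in> S") auto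
  next
    case True
    then obtain e x v where e: "e \<in> E" "x \<in> e" "v \<in> e" "x \<in> S" "v \<notin> S" by blast
    define E' where "E' = E - {e}"
    have EE: "E = insert e E'" "e \<notin> E'" "finite E'" using e less.prems(1) by (auto simp: E'_def)
    have cardlt: "card E' < card E" using e less.prems(1) unfolding E'_def by (metis card_Diff1_less)
    have pe: "0 \<le> p e" "p e \<le> 1" using e less.prems(3) by auto
    obtain u w where uw: "u \<noteq> w" "e = {u,w}" using less.prems(2) e(1) by (meson card_2_iff)
    have mm: "(x = Min e \<and> v = Max e) \<or> (x = Max e \<and> v = Min e)"
      using uw e by (cases "u < w") (auto simp: min_def max_def)
    define q where "q = (if x = Min e then p e else 1 - p e)"
    have q01: "0 \<le> q" "q \<le> 1" using pe by (auto simp: q_def)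
    define M where "M = rand_orient E' p"
    define R where "R = (\<lambda>T c. measure_pmf.prob M {f. c \<in> (arcs E' f)\<^sup>* `` T})"
    define RR where "RR = (\<lambda>T. measure_pmf.prob M {f. a \<in> (arcs E' f)\<^sup>* `` T \<and> b \<in> (arcs E' f)\<^sup>* `` T})"
    have IH: "RR T \<ge> R T a * R T b" for T
    proof -
      have "\<forall>e\<in>E'. card e = 2" "\<forall>e\<in>E'. 0 \<le> p e \<and> p e \<le> 1"
        using less.prems(2,3) by (auto simp: E'_def)
      from less.hyps[OF cardlt EE(3) this] show ?thesis by (simp add: RR_def R_def M_def)
    qed
    have mono: "R S c \<le> R (insert v S) c" for c
      unfolding R_def by (rule measure_pmf.finite_measure_mono) (auto dest: Image_mono[OF order_refl, of "insert v S" S])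
    have key: "(arcs E (f(e:=y)))\<^sup>* `` S = (if y = (x = Min e) then (arcs E' f)\<^sup>* `` (insert v S) else (arcs E' f)\<^sup>* `` S)" for f y
    proof -
      have ar: "arcs E (f(e:=y)) = insert (if y then (Min e, Max e) else (Max e, Min e)) (arcs E' f)"
        using arcs_upd[OF EE(2)] EE(1) by simp
      show ?thesis using mm
      proof
        assume h: "x = Min e \<and> v = Max e"
        show ?thesis
        proof (cases y)
          case True then show ?thesis using h ar img_L2[OF e(4)] by simp
        next
          case False then show ?thesis using h ar img_L1[OF e(4)] by simp
        qed
      next
        assume h: "x = Max e \<and> v = Min e"
        have ne: "Max e \<noteq> Min e" using uw by (auto simp: min_def max_def)
        show ?thesis
        proof (cases y)
          case True then show ?thesis using h ne ar img_L1[OF e(4)] by simp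
        next
          case False then show ?thesis using h ne ar img_L2[OF e(4)] by simp
        qed
      qed
    qed
    have split: "measure_pmf.prob (rand_orient E p) {\<sigma>. P ((arcs E \<sigma>)\<^sup>* `` S)}
       = q * measure_pmf.prob M {f. P ((arcs E' f)\<^sup>* `` (insert v S))}
         + (1 - q) * measure_pmf.prob M {f. P ((arcs E' f)\<^sup>* `` S)}" for P
    proof -
      have "measure_pmf.prob (rand_orient E p) {\<sigma>. P ((arcs E \<sigma>)\<^sup>* `` S)}
        = p e * measure_pmf.prob M ((\<lambda>f. f(e:=True)) -` {\<sigma>. P ((arcs E \<sigma>)\<^sup>* `` S)})
          + (1 - p e) * measure_pmf.prob M ((\<lambda>f. f(e:=False)) -` {\<sigma>. P ((arcs E \<sigma>)\<^sup>* `` S)})"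
        unfolding M_def
        unfolding EE(1) rand_orient_insert[OF EE(3,2)] by (rule split_prob[OF pe])
      moreover have "((\<lambda>f. f(e:=y)) -` {\<sigma>. P ((arcs E \<sigma>)\<^sup>* `` S)}) =
         {f. P (if y = (x = Min e) then (arcs E' f)\<^sup>* `` (insert v S) else (arcs E' f)\<^sup>* `` S)}" for y
        using key[of _ y] by (simp only: vimage_def mem_Collect_eq)
      ultimately show ?thesis by (simp add: q_def)
    qed
    have A: "measure_pmf.prob (rand_orient E p) {\<sigma>. c \<in> (arcs E \<sigma>)\<^sup>* `` S} = q * R (insert v S) c + (1-q) * R S c" for c
      using split[of "\<lambda>X. c \<in> X"] by (simp add: R_def)
    have B: "measure_pmf.prob (rand_orient E p) {\<sigma>. a \<in> (arcs E \<sigma>)\<^sup>* `` S \<and> b \<in> (arcs E \<sigma>)\<^sup>* `` S} = q * RR (insert v S) + (1-q) * RR S"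
      using split[of "\<lambda>X. a \<in> X \<and> b \<in> X"] by (simp add: RR_def)
    have alg: "q * c1 + (1-q) * c0 \<ge> (q * a1 + (1-q)*a0) * (q*b1 + (1-q)*b0)"
      if "c1 \<ge> a1*b1" "c0 \<ge> a0*b0" "a1 \<ge> a0" "b1 \<ge> b0" for a1 a0 b1 b0 c1 c0 :: real
    proof -
      have "q * c1 + (1-q) * c0 \<ge> q*(a1*b1) + (1-q)*(a0*b0)"
        using that q01 by (intro add_mono mult_left_mono) auto
      moreover have "q*(a1*b1) + (1-q)*(a0*b0) - (q * a1 + (1-q)*a0) * (q*b1 + (1-q)*b0)
         = q*(1-q)*((a1-a0)*(b1-b0))" by (simp add: algebra_simps)
      moreover have "q*(1-q)*((a1-a0)*(b1-b0)) \<ge> 0" using that q01 by simp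
      ultimately show ?thesis by linarith
    qed
    show ?thesis unfolding A B by (rule alg[OF IH IH mono mono])
  qed
qed

theorem theorem1:
  fixes V :: "nat set" and E :: "nat set set" and p :: "nat set \<Rightarrow> real"
    and s a b :: nat
  assumes "finite V"
    and "\<forall>e\<in>E. e \<subseteq> V \<and> card e = 2"
    and "\<forall>e\<in>E. 0 \<le> p e \<and> p e \<le> 1"
    and "s \<in> V" and "a \<in> V" and "b \<in> V"
  shows "measure_pmf.prob (rand_orient E p) {\<sigma>. reaches E \<sigma> s a \<and> reaches E \<sigma> s b}
    \<ge> measure_pmf.prob (rand_orient E p) {\<sigma>. reaches E \<sigma> s a}
      * measure_pmf.prob (rand_orient E p) {\<sigma>. reaches E \<sigma> s b}"
proof -
  have "E \<subseteq> Pow V" using assms(2) by auto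
  then have fE: "finite E" using assms(1) by (meson finite_Pow_iff finite_subset)
  have r: "reaches E \<sigma> s c \<longleftrightarrow> c \<in> (arcs E \<sigma>)\<^sup>* `` {s}" for \<sigma> c
    by (simp add: reaches_def)
  show ?thesis unfolding r
    using main[OF fE _ assms(3), of a "{s}" b] assms(2) by auto
qed

end
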